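(* Let $G$ be a connected graph and $G_{\lambda,k}$ a skeleton of it. The natural map $f:G\to G_{\lambda,k}$ is a quasi-isometry if and only if the blocks are uniformly bounded (i.e. there is a uniform bound on their diameters in $G$).
   Context: $d$ is the graph metric. A set $X$ of vertices is $k$-connected if any two of its points are joined by a finite sequence in $X$ with consecutive distances $\le k$. Skeleton $G_{\lambda,k}$ (root $x_0\in V(G)$, scale $\lambda\ge1$, connectivity $k\ge1$): layers $A_{N,\lambda}=\{x: N\lambda<d(x,x_0)\le(N+1)\lambda\}$, $N\in\mathbb Z$; blocks are the maximal $k$-connected subsets of layers; $G_{\lambda,k}$ has a vertex per block and an edge between two blocks iff an edge of $G$ joins a vertex of one to a vertex of the other. The natural map $f$ sends each vertex to its block. $f$ is a quasi-isometry if there are constants $a\ge1,b\ge0$ with $\frac1a d(x,y)-b\le d(f(x),f(y))\le a d(x,y)+b$ and a quasi-isometric embedding in the other direction exists. *)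

theory Defs
  imports Complex_Main
begin

definition walk_in :: "'a set \<Rightarrow> ('a \<Rightarrow> 'a \<Rightarrow> bool) \<Rightarrow> 'a list \<Rightarrow> bool" where
  "walk_in V E p \<longleftrightarrow> p \<noteq> [] \<and> set p \<subseteq> V \<and> (\<forall>i < length p - 1. E (p ! i) (p ! Suc i))"

definition graph :: "'a set \<Rightarrow> ('a \<Rightarrow> 'a \<Rightarrow> bool) \<Rightarrow> bool" where
  "graph V E \<longleftrightarrow> (\<forall>x y. E x y \<longrightarrow> x \<in> V \<and> y \<in> V \<and> E y x \<and> x \<noteq> y)"

definition connected_graph :: "'a set \<Rightarrow> ('a \<Rightarrow> 'a \<Rightarrow> bool) \<Rightarrow> bool" where
  "connected_graph V E \<longleftrightarrow> graph V E \<and>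
     (\<forall>x\<in>V. \<forall>y\<in>V. \<exists>p. walk_in V E p \<and> hd p = x \<and> last p = y)"

definition gdist :: "'a set \<Rightarrow> ('a \<Rightarrow> 'a \<Rightarrow> bool) \<Rightarrow> 'a \<Rightarrow> 'a \<Rightarrow> real" where
  "gdist V E x y = real (LEAST n. \<exists>p. walk_in V E p \<and> hd p = x \<and> last p = y \<and> length p = Suc n)"

definition k_joined :: "('a \<Rightarrow> 'a \<Rightarrow> real) \<Rightarrow> real \<Rightarrow> 'a set \<Rightarrow> 'a \<Rightarrow> 'a \<Rightarrow> bool" where
  "k_joined d k X x y \<longleftrightarrow> (\<exists>p. p \<noteq> [] \<and> set p \<subseteq> X \<and> hd p = x \<and> last p = y \<and>
      (\<forall>i < length p - 1. d (p ! i) (p ! Suc i) \<le> k))"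

definition k_connected :: "('a \<Rightarrow> 'a \<Rightarrow> real) \<Rightarrow> real \<Rightarrow> 'a set \<Rightarrow> bool" where
  "k_connected d k X \<longleftrightarrow> (\<forall>x\<in>X. \<forall>y\<in>X. k_joined d k X x y)"

definition layer :: "'a set \<Rightarrow> ('a \<Rightarrow> 'a \<Rightarrow> bool) \<Rightarrow> 'a \<Rightarrow> real \<Rightarrow> int \<Rightarrow> 'a set" where
  "layer V E x0 lam N = {x \<in> V. real_of_int N * lam < gdist V E x x0 \<and>
                                  gdist V E x x0 \<le> (real_of_int N + 1) * lam}"

definition blocks :: "'a set \<Rightarrow> ('a \<Rightarrow> 'a \<Rightarrow> bool) \<Rightarrow> 'a \<Rightarrow> real \<Rightarrow> real \<Rightarrow> 'a set set" where
  "blocks V E x0 lam k = {B. \<exists>N. B \<noteq> {} \<and> B \<subseteq> layer V E x0 lam N \<and> k_connected (gdist V E) k B \<and>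
      (\<forall>C. B \<subseteq> C \<and> C \<subseteq> layer V E x0 lam N \<and> k_connected (gdist V E) k C \<longrightarrow> C = B)}"

definition skel_edge :: "'a set \<Rightarrow> ('a \<Rightarrow> 'a \<Rightarrow> bool) \<Rightarrow> 'a \<Rightarrow> real \<Rightarrow> real \<Rightarrow> 'a set \<Rightarrow> 'a set \<Rightarrow> bool" where
  "skel_edge V E x0 lam k B C \<longleftrightarrow> B \<in> blocks V E x0 lam k \<and> C \<in> blocks V E x0 lam k \<and> B \<noteq> C \<and>
      (\<exists>x\<in>B. \<exists>y\<in>C. E x y)"

definition skel_map :: "'a set \<Rightarrow> ('a \<Rightarrow> 'a \<Rightarrow> bool) \<Rightarrow> 'a \<Rightarrow> real \<Rightarrow> real \<Rightarrow> 'a \<Rightarrow> 'a set" where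
  "skel_map V E x0 lam k x = (THE B. B \<in> blocks V E x0 lam k \<and> x \<in> B)"

definition qi_embedding ::
  "'a set \<Rightarrow> ('a \<Rightarrow> 'a \<Rightarrow> real) \<Rightarrow> 'b set \<Rightarrow> ('b \<Rightarrow> 'b \<Rightarrow> real) \<Rightarrow> ('a \<Rightarrow> 'b) \<Rightarrow> bool" where
  "qi_embedding X dX Y dY f \<longleftrightarrow> (\<forall>x\<in>X. f x \<in> Y) \<and>
     (\<exists>a b. a \<ge> 1 \<and> b \<ge> 0 \<and> (\<forall>x\<in>X. \<forall>y\<in>X.
        dX x y / a - b \<le> dY (f x) (f y) \<and> dY (f x) (f y) \<le> a * dX x y + b))"

definition quasi_isometry ::
  "'a set \<Rightarrow> ('a \<Rightarrow> 'a \<Rightarrow> real) \<Rightarrow> 'b set \<Rightarrow> ('b \<Rightarrow> 'b \<Rightarrow> real) \<Rightarrow> ('a \<Rightarrow> 'b) \<Rightarrow> bool" where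
  "quasi_isometry X dX Y dY f \<longleftrightarrow> qi_embedding X dX Y dY f \<and> (\<exists>g. qi_embedding Y dY X dX g)"

end

theory Submission
  imports Defs
begin


inductive wk :: "'a set \<Rightarrow> ('a \<Rightarrow> 'a \<Rightarrow> bool) \<Rightarrow> 'a \<Rightarrow> 'a \<Rightarrow> nat \<Rightarrow> bool" for V E where
  w0: "x \<in> V \<Longrightarrow> wk V E x x 0"
| wS: "x \<in> V \<Longrightarrow> E x y \<Longrightarrow> wk V E y z n \<Longrightarrow> wk V E x z (Suc n)"

lemma walk_to_wk:
  "walk_in V E p \<Longrightarrow> wk V E (hd p) (last p) (length p - 1)"
proof (induction p)
  case Nil thus ?case by (simp add: walk_in_def)
next
  case (Cons a p)
  show ?case
  proof (cases "p = []")
    case True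
    with Cons.prems show ?thesis by (auto simp: walk_in_def intro: w0)
  next
    case False
    have h: "\<forall>i<length p. E ((a#p)!i) ((a#p)!Suc i)" using Cons.prems by (simp add: walk_in_def)
    have wp: "walk_in V E p"
      unfolding walk_in_def
    proof (intro conjI allI impI)
      fix i assume "i < length p - 1"
      then have "Suc i < length p" by simp
      from h[rule_format, OF this] show "E (p!i) (p!Suc i)" by simp
    qed (use False Cons.prems in \<open>auto simp: walk_in_def\<close>)
    have e: "E a (hd p)" using h[rule_format, of 0] False by (simp add: hd_conv_nth)
    have "a \<in> V" using Cons.prems by (simp add: walk_in_def)
    from wS[OF this e Cons.IH[OF wp]] False show ?thesis by simp
  qed
qed

lemma wk_to_walk: "wk V E x y n \<Longrightarrow> \<exists>p. walk_in V E p \<and> hd p = x \<and> last p = y \<and> length p = Suc n"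
proof (induction rule: wk.induct)
  case (w0 x) thus ?case by (intro exI[of _ "[x]"]) (simp add: walk_in_def)
next
  case (wS x y z n)
  then obtain p where p: "walk_in V E p" "hd p = y" "last p = z" "length p = Suc n" by blast
  have "walk_in V E (x # p)"
    unfolding walk_in_def
  proof (intro conjI allI impI)
    show "x#p \<noteq> []" by simp
    show "set (x#p) \<subseteq> V" using p(1) wS.hyps(1) by (auto simp: walk_in_def)
    fix i assume i: "i < length (x#p) - 1"
    show "E ((x#p)!i) ((x#p)!Suc i)"
    proof (cases i)
      case 0 thus ?thesis using p wS.hyps(2) by (auto simp: walk_in_def hd_conv_nth)
    next
      case (Suc j) thus ?thesis using p(1) i by (auto simp: walk_in_def)
    qed
  qed
  moreover have "p \<noteq> []" using p by (auto simp: walk_in_def)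
  ultimately show ?case using p by (intro exI[of _ "x#p"]) auto
qed

lemma walk_iff_wk: "(\<exists>p. walk_in V E p \<and> hd p = x \<and> last p = y \<and> length p = Suc n) \<longleftrightarrow> wk V E x y n"
proof
  assume "\<exists>p. walk_in V E p \<and> hd p = x \<and> last p = y \<and> length p = Suc n"
  then obtain p where "walk_in V E p" "hd p = x" "last p = y" "length p = Suc n" by blast
  with walk_to_wk[OF this(1)] show "wk V E x y n" by simp
qed (rule wk_to_walk)

lemma gdist_wk: "gdist V E x y = real (LEAST n. wk V E x y n)"
  by (simp add: gdist_def walk_iff_wk)

lemma gdist_le: "wk V E x y n \<Longrightarrow> gdist V E x y \<le> real n"
  by (simp add: gdist_wk Least_le)

lemma gdist_obtain: "wk V E x y m \<Longrightarrow> \<exists>n. wk V E x y n \<and> gdist V E x y = real n"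
  by (metis LeastI gdist_wk)

lemma gdist_nonneg: "gdist V E x y \<ge> 0"
  by (simp add: gdist_wk)

lemma wk_in: "wk V E x y n \<Longrightarrow> x \<in> V \<and> y \<in> V"
  by (induction rule: wk.induct) auto

lemma wk_trans: "wk V E x y m \<Longrightarrow> wk V E y z n \<Longrightarrow> wk V E x z (m+n)"
  by (induction arbitrary: z rule: wk.induct) (auto intro: wk.intros)

lemma wk_snoc: "wk V E x y n \<Longrightarrow> E y z \<Longrightarrow> z \<in> V \<Longrightarrow> wk V E x z (Suc n)"
proof -
  assume a: "wk V E x y n" "E y z" "z \<in> V"
  have "wk V E y z (Suc 0)" using a wk_in[OF a(1)] by (auto intro: wk.intros)
  from wk_trans[OF a(1) this] show ?thesis by simp
qed

lemma wk_sym: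
  assumes "\<And>a b. a \<in> V \<Longrightarrow> b \<in> V \<Longrightarrow> E a b \<Longrightarrow> E b a"
  shows "wk V E x y n \<Longrightarrow> wk V E y x n"
proof (induction rule: wk.induct)
  case (w0 x) thus ?case by (rule wk.w0)
next
  case (wS x y z n)
  have "y \<in> V" using wk_in[OF wS.hyps(3)] by simp
  with wS assms show ?case by (auto intro: wk_snoc)
qed

lemma wk_mono: "wk V E x y n \<Longrightarrow> V \<subseteq> W \<Longrightarrow> wk W E x y n"
  by (induction rule: wk.induct) (auto intro: wk.intros)

lemma wk_prefix: "wk V E y z n \<Longrightarrow> wk V E x y m \<Longrightarrow> wk {w. \<exists>m. wk V E x w m} E y z n"
proof (induction arbitrary: m rule: wk.induct)
  case (w0 y) thus ?case by (auto intro: wk.w0)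
next
  case (wS y y' z n)
  have "y' \<in> V" using wk_in[OF wS.hyps(3)] by simp
  then have "wk V E x y' (Suc m)" using wk_snoc[OF wS.prems wS.hyps(2)] by simp
  from wS.IH[OF this] have 1: "wk {w. \<exists>m. wk V E x w m} E y' z n" .
  have 2: "y \<in> {w. \<exists>m. wk V E x w m}" using wS.prems by blast
  show ?case using wk.wS[OF 2 wS.hyps(2) 1] .
qed

lemma kj_iff: "k_joined d k X x y \<longleftrightarrow> (\<exists>n. wk X (\<lambda>a b. d a b \<le> k) x y n)"
proof
  assume "k_joined d k X x y"
  then obtain p where p: "p \<noteq> []" "set p \<subseteq> X" "hd p = x" "last p = y"
      "\<forall>i < length p - 1. d (p ! i) (p ! Suc i) \<le> k" unfolding k_joined_def by blast
  then have "walk_in X (\<lambda>a b. d a b \<le> k) p" by (simp add: walk_in_def)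
  from walk_to_wk[OF this] p show "\<exists>n. wk X (\<lambda>a b. d a b \<le> k) x y n" by auto
next
  assume "\<exists>n. wk X (\<lambda>a b. d a b \<le> k) x y n"
  then obtain n where "wk X (\<lambda>a b. d a b \<le> k) x y n" by blast
  from wk_to_walk[OF this] show "k_joined d k X x y"
    unfolding k_joined_def walk_in_def by blast
qed

lemma kc_iff: "k_connected d k X \<longleftrightarrow> (\<forall>x\<in>X. \<forall>y\<in>X. \<exists>n. wk X (\<lambda>a b. d a b \<le> k) x y n)"
  by (simp add: k_connected_def kj_iff)

lemma kc_union:
  assumes "k_connected d k B" "k_connected d k C" "x \<in> B" "x \<in> C"
  shows "k_connected d k (B \<union> C)"
  unfolding kc_iff
proof (intro ballI)
  let ?E = "\<lambda>a b. d a b \<le> k"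
  have B: "\<forall>y\<in>B. \<forall>z\<in>B. \<exists>n. wk (B \<union> C) ?E y z n"
    using assms(1) unfolding kc_iff by (meson Un_upper1 wk_mono)
  have C: "\<forall>y\<in>C. \<forall>z\<in>C. \<exists>n. wk (B \<union> C) ?E y z n"
    using assms(2) unfolding kc_iff by (meson Un_upper2 wk_mono)
  fix y z assume "y \<in> B \<union> C" "z \<in> B \<union> C"
  then show "\<exists>n. wk (B \<union> C) ?E y z n"
    using B C assms(3,4) by (meson Un_iff wk_trans)
qed



locale skel =
  fixes V :: "'a set" and E :: "'a \<Rightarrow> 'a \<Rightarrow> bool" and x0 :: 'a and lam k :: real
  assumes cg: "connected_graph V E" and x0: "x0 \<in> V" and lam: "lam \<ge> 1" and kk: "k \<ge> 1"
begin

abbreviation "dG \<equiv> gdist V E"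
abbreviation "LL \<equiv> layer V E x0 lam"
abbreviation "Bl \<equiv> blocks V E x0 lam k"
abbreviation "SE \<equiv> skel_edge V E x0 lam k"
abbreviation "dS \<equiv> gdist Bl SE"
abbreviation "ff \<equiv> skel_map V E x0 lam k"

lemma gr: "graph V E" using cg by (simp add: connected_graph_def)

lemma conn: assumes "x \<in> V" "y \<in> V" shows "\<exists>n. wk V E x y n"
proof -
  obtain p where p: "walk_in V E p" "hd p = x" "last p = y"
    using cg assms unfolding connected_graph_def by blast
  from walk_to_wk[OF p(1)] p(2,3) show ?thesis by blast
qed

lemma Esym: "a \<in> V \<Longrightarrow> b \<in> V \<Longrightarrow> E a b \<Longrightarrow> E b a"
  using gr by (simp add: graph_def)

lemma wkG_sym: "wk V E x y n \<Longrightarrow> wk V E y x n"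
  by (rule wk_sym[of V E]) (auto intro: Esym)

lemma dsym: assumes "x \<in> V" "y \<in> V" shows "dG x y = dG y x"
proof -
  obtain n where n: "wk V E x y n" "dG x y = real n" using conn[OF assms] by (metis gdist_obtain)
  obtain m where m: "wk V E y x m" "dG y x = real m" using conn[OF assms(2,1)] by (metis gdist_obtain)
  have "dG y x \<le> dG x y" using gdist_le[OF wkG_sym[OF n(1)]] n(2) by simp
  moreover have "dG x y \<le> dG y x" using gdist_le[OF wkG_sym[OF m(1)]] m(2) by simp
  ultimately show ?thesis by simp
qed

lemma dtri: assumes "x \<in> V" "y \<in> V" "z \<in> V" shows "dG x z \<le> dG x y + dG y z"
proof -
  obtain n where n: "wk V E x y n" "dG x y = real n" using conn[OF assms(1,2)] by (metis gdist_obtain)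
  obtain m where m: "wk V E y z m" "dG y z = real m" using conn[OF assms(2,3)] by (metis gdist_obtain)
  show ?thesis using gdist_le[OF wk_trans[OF n(1) m(1)]] n(2) m(2) by simp
qed

lemma dedge: assumes "E x y" shows "dG x y \<le> 1"
proof -
  have "x \<in> V \<and> y \<in> V" using gr assms unfolding graph_def by blast
  then have "x \<in> V" "y \<in> V" by auto
  then have "wk V E x y (Suc 0)" using assms by (auto intro: wk.intros)
  from gdist_le[OF this] show ?thesis by simp
qed

lemma layer_sub: "LL N \<subseteq> V" by (auto simp: layer_def)

lemma layer_unique: assumes "x \<in> LL N" "x \<in> LL N'" shows "N = N'"
proof (rule ccontr)
  have lp: "lam \<ge> 0" using lam by simp
  have *: False if "x \<in> LL A" "x \<in> LL B" "A < B" for A B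
  proof -
    have "real_of_int A + 1 \<le> real_of_int B" using that(3) by linarith
    then have "(real_of_int A + 1) * lam \<le> real_of_int B * lam" using lp by (rule mult_right_mono)
    then show False using that(1,2) by (auto simp: layer_def)
  qed
  assume "N \<noteq> N'"
  then show False using *[OF assms] *[OF assms(2,1)] by linarith
qed

lemma layer_exists: assumes "x \<in> V" shows "\<exists>N. x \<in> LL N"
proof -
  define t where "t = dG x x0 / lam"
  have lp: "lam > 0" using lam by simp
  have t: "dG x x0 = t * lam" using lp by (simp add: t_def)
  have c: "of_int \<lceil>t\<rceil> - 1 < t" "t \<le> of_int \<lceil>t\<rceil>" using ceiling_correct by auto
  have "real_of_int (\<lceil>t\<rceil> - 1) * lam < dG x x0" using c(1) lp t by simp
  moreover have "dG x x0 \<le> (real_of_int (\<lceil>t\<rceil> - 1) + 1) * lam" using c(2) lp t by simp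
  ultimately have "x \<in> LL (\<lceil>t\<rceil> - 1)" using assms by (simp add: layer_def)
  then show ?thesis by blast
qed

lemma Bl_def': "B \<in> Bl \<longleftrightarrow> (\<exists>N. B \<noteq> {} \<and> B \<subseteq> LL N \<and> k_connected dG k B \<and>
      (\<forall>C. B \<subseteq> C \<and> C \<subseteq> LL N \<and> k_connected dG k C \<longrightarrow> C = B))"
  by (simp add: blocks_def)

lemma Bl_sub: "B \<in> Bl \<Longrightarrow> B \<subseteq> V"
  using layer_sub unfolding Bl_def' by blast

lemma Bl_ne: "B \<in> Bl \<Longrightarrow> B \<noteq> {}"
  unfolding Bl_def' by blast

lemma block_unique: assumes "B \<in> Bl" "C \<in> Bl" "x \<in> B" "x \<in> C" shows "B = C"
proof -
  obtain N where N: "B \<subseteq> LL N" "k_connected dG k B"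
     "\<forall>D. B \<subseteq> D \<and> D \<subseteq> LL N \<and> k_connected dG k D \<longrightarrow> D = B" using assms(1) unfolding Bl_def' by blast
  obtain N' where N': "C \<subseteq> LL N'" "k_connected dG k C"
     "\<forall>D. C \<subseteq> D \<and> D \<subseteq> LL N' \<and> k_connected dG k D \<longrightarrow> D = C" using assms(2) unfolding Bl_def' by blast
  have "x \<in> LL N" "x \<in> LL N'" using N(1) N'(1) assms(3,4) by auto
  then have "N = N'" by (rule layer_unique)
  have u: "k_connected dG k (B \<union> C)" using kc_union[OF N(2) N'(2) assms(3,4)] .
  have s1: "B \<union> C \<subseteq> LL N" using N(1) N'(1) \<open>N = N'\<close> by simp
  have "B \<union> C = B" using N(3)[rule_format, of "B \<union> C"] u s1 by simp
  moreover have "B \<union> C = C" using N'(3)[rule_format, of "B \<union> C"] u s1 \<open>N = N'\<close> by simp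
  ultimately show ?thesis by simp
qed

lemma block_exists: assumes "x \<in> V" shows "\<exists>B\<in>Bl. x \<in> B"
proof -
  obtain N where N: "x \<in> LL N" using layer_exists assms by blast
  let ?E = "\<lambda>a b. dG a b \<le> k"
  define K where "K = {w. \<exists>m. wk (LL N) ?E x w m}"
  have x0K: "wk (LL N) ?E x x 0" using N by (rule wk.w0)
  have xK: "x \<in> K" using x0K K_def by blast
  have KL: "K \<subseteq> LL N" unfolding K_def using wk_in by fast
  have pre: "wk K ?E x y m" if "wk (LL N) ?E x y m" for y m
    using wk_prefix[OF that x0K] unfolding K_def .
  have kc: "k_connected dG k K"
    unfolding kc_iff
  proof (intro ballI)
    fix y z assume "y \<in> K" "z \<in> K"
    then obtain m1 m2 where "wk (LL N) ?E x y m1" "wk (LL N) ?E x z m2" unfolding K_def by blast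
    then have 1: "wk K ?E x y m1" and 2: "wk K ?E x z m2" using pre by auto
    have KV: "K \<subseteq> V" using KL layer_sub by blast
    have "wk K ?E y x m1"
    proof (rule wk_sym[OF _ 1])
      fix a b assume "a \<in> K" "b \<in> K" "dG a b \<le> k"
      then have "a \<in> V" "b \<in> V" using KV by auto
      then have "dG a b = dG b a" by (rule dsym)
      then show "dG b a \<le> k" using \<open>dG a b \<le> k\<close> by linarith
    qed
    from wk_trans[OF this 2] show "\<exists>n. wk K ?E y z n" by blast
  qed
  have max: "C = K" if "K \<subseteq> C" "C \<subseteq> LL N" "k_connected dG k C" for C
  proof -
    have "C \<subseteq> K"
    proof
      fix c assume "c \<in> C"
      with that xK obtain n where "wk C ?E x c n" unfolding kc_iff by blast
      from wk_mono[OF this that(2)] show "c \<in> K" unfolding K_def by blast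
    qed
    with that show ?thesis by blast
  qed
  have "K \<in> Bl" unfolding Bl_def' using xK KL kc max by blast
  with xK show ?thesis by blast
qed

lemma ff_prop: assumes "x \<in> V" shows "ff x \<in> Bl \<and> x \<in> ff x"
proof -
  obtain B where "B \<in> Bl" "x \<in> B" using block_exists assms by blast
  then have "\<exists>!B. B \<in> Bl \<and> x \<in> B" using block_unique by blast
  from theI'[OF this] show ?thesis unfolding skel_map_def .
qed

lemma ff_eq: assumes "B \<in> Bl" "x \<in> B" shows "ff x = B"
  using ff_prop[of x] Bl_sub[OF assms(1)] assms block_unique by blast

lemma map_walk: "wk V E x y n \<Longrightarrow> \<exists>m\<le>n. wk Bl SE (ff x) (ff y) m"
proof (induction rule: wk.induct)
  case (w0 x) thus ?case using ff_prop by (auto intro: wk.w0)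
next
  case (wS x y z n)
  then obtain m where m: "m \<le> n" "wk Bl SE (ff y) (ff z) m" by blast
  have yV: "y \<in> V" using wk_in[OF wS.hyps(3)] by simp
  show ?case
  proof (cases "ff x = ff y")
    case True thus ?thesis using m by (metis le_SucI)
  next
    case False
    have "SE (ff x) (ff y)" unfolding skel_edge_def
      using False ff_prop[OF wS.hyps(1)] ff_prop[OF yV] wS.hyps(2) by blast
    then have "wk Bl SE (ff x) (ff z) (Suc m)" using ff_prop[OF wS.hyps(1)] m(2) by (auto intro: wk.wS)
    thus ?thesis using m(1) by auto
  qed
qed

lemma dS_le: assumes "x \<in> V" "y \<in> V" shows "dS (ff x) (ff y) \<le> dG x y"
proof -
  obtain n where n: "wk V E x y n" "dG x y = real n" using conn[OF assms] by (metis gdist_obtain)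
  obtain m where "m \<le> n" "wk Bl SE (ff x) (ff y) m" using map_walk[OF n(1)] by blast
  with gdist_le[OF this(2)] n(2) show ?thesis by simp
qed

lemma skel_conn: assumes "B \<in> Bl" "C \<in> Bl" shows "\<exists>m. wk Bl SE B C m"
proof -
  obtain x y where xy: "x \<in> B" "y \<in> C" using Bl_ne assms by blast
  have V: "x \<in> V" "y \<in> V" using xy Bl_sub assms by auto
  obtain n where "wk V E x y n" using conn[OF V] by blast
  from map_walk[OF this] obtain m where "wk Bl SE (ff x) (ff y) m" by blast
  moreover have "ff x = B" "ff y = C" using ff_eq assms xy by auto
  ultimately show ?thesis by auto
qed

lemma lower_walk:
  assumes M: "M \<ge> 0" and bd: "\<forall>B\<in>Bl. \<forall>x\<in>B. \<forall>y\<in>B. dG x y \<le> M"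
  shows "wk Bl SE B C m \<Longrightarrow> x \<in> B \<Longrightarrow> y \<in> C \<Longrightarrow> dG x y \<le> (M+1) * real m + M"
proof (induction arbitrary: x rule: wk.induct)
  case (w0 B) thus ?case using bd by auto
next
  case (wS B B' C m)
  obtain u v where uv: "u \<in> B" "v \<in> B'" "E u v" using wS.hyps(2) unfolding skel_edge_def by blast
  have B'Bl: "B' \<in> Bl" using wS.hyps(2) unfolding skel_edge_def by blast
  have CBl: "C \<in> Bl" using wk_in[OF wS.hyps(3)] by simp
  have V: "x \<in> V" "u \<in> V" "v \<in> V" "y \<in> V"
    using Bl_sub wS.hyps(1) B'Bl CBl uv wS.prems by auto
  have "dG x y \<le> dG x u + dG u y" using dtri V by blast
  also have "dG u y \<le> dG u v + dG v y" using dtri V by blast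
  finally have "dG x y \<le> dG x u + dG u v + dG v y" by simp
  moreover have "dG x u \<le> M" using bd wS.hyps(1) wS.prems uv by blast
  moreover have "dG u v \<le> 1" using dedge uv by blast
  moreover have "dG v y \<le> (M+1) * real m + M" using wS.IH uv wS.prems by blast
  moreover have "(M+1) * real (Suc m) + M = M + 1 + ((M+1) * real m + M)" by (simp add: algebra_simps)
  ultimately show ?case by linarith
qed

lemma lower:
  assumes M: "M \<ge> 0" and bd: "\<forall>B\<in>Bl. \<forall>x\<in>B. \<forall>y\<in>B. dG x y \<le> M"
    and "B \<in> Bl" "C \<in> Bl" "x \<in> B" "y \<in> C"
  shows "dG x y \<le> (M+1) * dS B C + M"
proof -
  obtain n where "wk Bl SE B C n" "dS B C = real n" using skel_conn[OF assms(3,4)] by (metis gdist_obtain)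
  note nn = this
  from lower_walk[OF M bd nn(1) assms(5,6)] have "dG x y \<le> (M+1) * real n + M" .
  then show ?thesis using nn(2) by simp
qed

lemma arith1: "(a::real) \<ge> 1 \<Longrightarrow> b \<ge> 0 \<Longrightarrow> s \<ge> 0 \<Longrightarrow> t \<le> a*s + b \<Longrightarrow> t/a - b \<le> s"
proof -
  assume a: "a \<ge> 1" "b \<ge> 0" "s \<ge> 0" "t \<le> a*s + b"
  have "1 * b \<le> a * b" using mult_right_mono[of 1 a b] a by simp
  then have "t \<le> a*s + a*b" using a by simp
  then have "t \<le> a * (s+b)" by (simp add: distrib_left)
  then have "t / a \<le> s + b" using a by (simp add: pos_divide_le_eq mult.commute)
  then show ?thesis by simp
qed

theorem main:
  "quasi_isometry V dG Bl dS ff \<longleftrightarrow> (\<exists>M. \<forall>B\<in>Bl. \<forall>x\<in>B. \<forall>y\<in>B. dG x y \<le> M)"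
proof
  assume "quasi_isometry V dG Bl dS ff"
  then obtain a b where ab: "a \<ge> 1" "b \<ge> 0" "\<forall>x\<in>V. \<forall>y\<in>V. dG x y / a - b \<le> dS (ff x) (ff y)"
    unfolding quasi_isometry_def qi_embedding_def by blast
  have "dG x y \<le> a * b" if "B \<in> Bl" "x \<in> B" "y \<in> B" for B x y
  proof -
    have V: "x \<in> V" "y \<in> V" using Bl_sub that by auto
    have "ff x = B" "ff y = B" using ff_eq that by auto
    moreover have "dS B B \<le> 0" using gdist_le[OF wk.w0[OF that(1)]] by simp
    ultimately have "dG x y / a - b \<le> 0" using ab(3) V by (metis order_trans)
    then have "dG x y / a \<le> b" by simp
    then show ?thesis using ab(1) by (simp add: pos_divide_le_eq mult.commute)
  qed
  then show "\<exists>M. \<forall>B\<in>Bl. \<forall>x\<in>B. \<forall>y\<in>B. dG x y \<le> M" by blast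
next
  assume "\<exists>M. \<forall>B\<in>Bl. \<forall>x\<in>B. \<forall>y\<in>B. dG x y \<le> M"
  then obtain M0 where M0: "\<forall>B\<in>Bl. \<forall>x\<in>B. \<forall>y\<in>B. dG x y \<le> M0" by blast
  define M where "M = max M0 0"
  have M: "M \<ge> 0" unfolding M_def by simp
  have bd: "\<forall>B\<in>Bl. \<forall>x\<in>B. \<forall>y\<in>B. dG x y \<le> M" using M0 unfolding M_def by (meson max.coboundedI1)
  have a1: "M + 1 \<ge> 1" using M by simp
  have f: "qi_embedding V dG Bl dS ff"
    unfolding qi_embedding_def
  proof (intro conjI)
    show "\<forall>x\<in>V. ff x \<in> Bl" using ff_prop by blast
  next
    show "\<exists>a b. 1 \<le> a \<and> 0 \<le> b \<and> (\<forall>x\<in>V. \<forall>y\<in>V. dG x y / a - b \<le> dS (ff x) (ff y) \<and> dS (ff x) (ff y) \<le> a * dG x y + b)"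
    proof (rule exI[of _ "M+1"], rule exI[of _ M], intro conjI ballI)
    show "M + 1 \<ge> 1" "M \<ge> 0" using M by auto
    fix x y assume xy: "x \<in> V" "y \<in> V"
    have l: "dG x y \<le> (M+1) * dS (ff x) (ff y) + M"
      using lower[OF M bd] ff_prop xy by blast
    show "dG x y / (M+1) - M \<le> dS (ff x) (ff y)"
      using arith1[OF a1 M gdist_nonneg l] .
    have "dS (ff x) (ff y) \<le> dG x y" using dS_le xy by blast
    also have "dG x y \<le> (M+1) * dG x y + M" using M gdist_nonneg[of V E x y]
      by (simp add: algebra_simps)
    finally show "dS (ff x) (ff y) \<le> (M+1) * dG x y + M" .
  qed
  qed
  define g :: "'a set \<Rightarrow> 'a" where "g = (\<lambda>B. SOME x. x \<in> B)"
  have gB: "g B \<in> B" if "B \<in> Bl" for B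
    unfolding g_def using Bl_ne[OF that] by (simp add: some_in_eq)
  have gV: "g B \<in> V" if "B \<in> Bl" for B using gB Bl_sub that by blast
  have fg: "ff (g B) = B" if "B \<in> Bl" for B using ff_eq gB that by blast
  have g: "qi_embedding Bl dS V dG g"
    unfolding qi_embedding_def
  proof (intro conjI)
    show "\<forall>B\<in>Bl. g B \<in> V" using gV by blast
  next
    show "\<exists>a b. 1 \<le> a \<and> 0 \<le> b \<and> (\<forall>B\<in>Bl. \<forall>C\<in>Bl. dS B C / a - b \<le> dG (g B) (g C) \<and> dG (g B) (g C) \<le> a * dS B C + b)"
    proof (rule exI[of _ "M+1"], rule exI[of _ M], intro conjI ballI)
    show "M + 1 \<ge> 1" "M \<ge> 0" using M by auto
    fix B C assume BC: "B \<in> Bl" "C \<in> Bl"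
    have "dS B C \<le> dG (g B) (g C)" using dS_le[OF gV gV] fg BC by metis
    then show "dS B C / (M+1) - M \<le> dG (g B) (g C)"
    proof -
      have "dS B C \<le> (M+1) * dS B C + M" using M gdist_nonneg[of Bl SE B C] by (simp add: algebra_simps)
      from arith1[OF a1 M gdist_nonneg this] have "dS B C / (M+1) - M \<le> dS B C" .
      then show ?thesis using \<open>dS B C \<le> dG (g B) (g C)\<close> by linarith
    qed
    show "dG (g B) (g C) \<le> (M+1) * dS B C + M"
      using lower[OF M bd BC gB gB] BC by blast
  qed
  qed
  show "quasi_isometry V dG Bl dS ff"
    unfolding quasi_isometry_def using f g by blast
qed

end


theorem lemma3:
  fixes V :: "'a set" and E :: "'a \<Rightarrow> 'a \<Rightarrow> bool" and x0 :: 'a and lam k :: real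
  assumes "connected_graph V E" and "x0 \<in> V" and "lam \<ge> 1" and "k \<ge> 1"
  shows "quasi_isometry V (gdist V E)
            (blocks V E x0 lam k) (gdist (blocks V E x0 lam k) (skel_edge V E x0 lam k))
            (skel_map V E x0 lam k)
         \<longleftrightarrow> (\<exists>M. \<forall>B\<in>blocks V E x0 lam k. \<forall>x\<in>B. \<forall>y\<in>B. gdist V E x y \<le> M)"
proof -
  interpret skel V E x0 lam k using assms by unfold_locales
  show ?thesis by (rule main)
qed

end
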